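(* For every $1$-Sperner hypergraph ${\cal H}=(V,{\cal E})$ with $|V|\ge2$ and without universal vertices, isolated vertices, and twin vertices, we have $|{\cal E}|\ge\left\lceil\frac{|V|+2}{2}\right\rceil$. This bound is sharp: for every $k\ge2$ there is such a hypergraph with $|V|=2^k-2$ and $|{\cal E}|=2^{k-1}=\left\lceil\frac{|V|+2}{2}\right\rceil$.
   Context: A hypergraph ${\cal H}=(V,{\cal E})$ consists of a finite vertex set $V$ and a set ${\cal E}$ of subsets of $V$. It is $1$-Sperner if every two distinct hyperedges $e,f$ satisfy $\min\{|e\setminus f|,|f\setminus e|\}=1$. A vertex is universal (resp. isolated) if it belongs to all (resp. no) hyperedges; two distinct vertices are twins if they belong to exactly the same hyperedges. *)

theory Defs
  imports Complex_Main
begin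

definition hypergraph :: "'a set \<Rightarrow> 'a set set \<Rightarrow> bool" where
  "hypergraph V E \<longleftrightarrow> finite V \<and> (\<forall>e\<in>E. e \<subseteq> V)"

definition one_sperner :: "'a set set \<Rightarrow> bool" where
  "one_sperner E \<longleftrightarrow>
     (\<forall>e\<in>E. \<forall>f\<in>E. e \<noteq> f \<longrightarrow> min (card (e - f)) (card (f - e)) = 1)"

definition universal_vertex :: "'a set set \<Rightarrow> 'a \<Rightarrow> bool" where
  "universal_vertex E v \<longleftrightarrow> (\<forall>e\<in>E. v \<in> e)"

definition isolated_vertex :: "'a set set \<Rightarrow> 'a \<Rightarrow> bool" where
  "isolated_vertex E v \<longleftrightarrow> (\<forall>e\<in>E. v \<notin> e)"

definition twins :: "'a set set \<Rightarrow> 'a \<Rightarrow> 'a \<Rightarrow> bool" where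
  "twins E u v \<longleftrightarrow> u \<noteq> v \<and> (\<forall>e\<in>E. u \<in> e \<longleftrightarrow> v \<in> e)"

definition reduced_1_sperner :: "'a set \<Rightarrow> 'a set set \<Rightarrow> bool" where
  "reduced_1_sperner V E \<longleftrightarrow> hypergraph V E \<and> one_sperner E
     \<and> (\<forall>v\<in>V. \<not> universal_vertex E v) \<and> (\<forall>v\<in>V. \<not> isolated_vertex E v)
     \<and> (\<forall>u\<in>V. \<forall>v\<in>V. \<not> twins E u v)"

end

theory Submission
  imports Defs
begin


definition vtyp :: "'a set set \<Rightarrow> 'a \<Rightarrow> 'a set set" where
  "vtyp E v = {e\<in>E. v\<in>e}"
definition TT :: "'a set \<Rightarrow> 'a set set \<Rightarrow> 'a set set set" where
  "TT V E = vtyp E ` V - {{}, E}"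

lemma one_sperner_subset: "one_sperner E \<Longrightarrow> F \<subseteq> E \<Longrightarrow> one_sperner F"
  unfolding one_sperner_def by blast

lemma sp_cases:
  assumes "one_sperner E" "e \<in> E" "g \<in> E" "e \<noteq> g"
  shows "card (e - g) = 1 \<or> card (g - e) = 1" "e - g \<noteq> {}"
proof -
  have m: "min (card (e - g)) (card (g - e)) = 1" using assms unfolding one_sperner_def by blast
  then show "card (e - g) = 1 \<or> card (g - e) = 1" by linarith
  from m have "card (e - g) \<ge> 1" by linarith
  then show "e - g \<noteq> {}" by (intro notI) simp
qed

lemma decomp:
  assumes fin: "finite E" and sp: "one_sperner E" and c2: "card E \<ge> 2"
    and fe: "\<forall>e\<in>E. finite e"
  shows "\<exists>z. (\<exists>e\<in>E. z\<in>e) \<and> (\<exists>g\<in>E. z\<notin>g) \<and> (\<forall>e\<in>E. \<forall>g\<in>E. z\<in>e \<longrightarrow> z\<notin>g \<longrightarrow> e - {z} \<subseteq> g)"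
proof -
  have ne: "E \<noteq> {}" using c2 by auto
  define M where "M = Max (card ` E)"
  have "M \<in> card ` E" unfolding M_def using fin ne by simp
  then obtain f where fE: "f \<in> E" and cf: "card f = M" by auto
  have fmax: "\<And>e. e \<in> E \<Longrightarrow> card e \<le> card f" using fin cf unfolding M_def by simp
  have F1: "card (e - f) = 1" if "e \<in> E" "e \<noteq> f" for e
  proof (rule ccontr)
    assume nn: "card (e - f) \<noteq> 1"
    have "card (e - f) \<ge> 1" using sp_cases(2)[OF sp that(1) fE that(2)] fe that(1) by (simp add: card_gt_0_iff Suc_leI)
    with nn have a: "card (e - f) \<ge> 2" by linarith
    have b: "card (f - e) = 1" using sp_cases(1)[OF sp that(1) fE that(2)] nn by blast
    have "card e = card (e \<inter> f) + card (e - f)" using fe that(1) card_Int_Diff by blast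
    moreover have "card f = card (f \<inter> e) + card (f - e)" using fe fE card_Int_Diff by blast
    moreover have "e \<inter> f = f \<inter> e" by blast
    ultimately have "card e > card f" using a b by simp
    with fmax[OF that(1)] show False by simp
  qed
  have "E - {f} \<noteq> {}"
  proof
    assume "E - {f} = {}"
    then have "E = {f}" using fE by auto
    then show False using c2 by simp
  qed
  define M0 where "M0 = Min (card ` (E - {f}))"
  have "M0 \<in> card ` (E - {f})" unfolding M0_def using fin \<open>E - {f} \<noteq> {}\<close> by simp
  then obtain e0 where e0E: "e0 \<in> E" "e0 \<noteq> f" and ce0: "card e0 = M0" by auto
  have e0min: "\<And>e. e \<in> E \<Longrightarrow> e \<noteq> f \<Longrightarrow> card e0 \<le> card e" using fin ce0 unfolding M0_def by simp
  obtain z where e0f: "e0 - f = {z}" using F1[OF e0E] by (meson card_1_singletonE)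
  have zf: "z \<notin> f" using e0f by auto
  have ze0: "z \<in> e0" using e0f by auto
  have key: "e - {z} \<subseteq> g" if eE: "e \<in> E" and gE: "g \<in> E" and ze: "z \<in> e" and zg: "z \<notin> g" for e g
  proof -
    have ef: "e \<noteq> f" using ze zf by auto
    have "card (e - f) = 1" using F1[OF eE ef] .
    then obtain y where "e - f = {y}" by (meson card_1_singletonE)
    then have ezf: "e - f = {z}" using ze zf by auto
    show ?thesis
    proof (cases "g = f")
      case True then show ?thesis using ezf by auto
    next
      case gf: False
      obtain x where gfx: "g - f = {x}" using F1[OF gE gf] by (meson card_1_singletonE)
      have xz: "x \<noteq> z" using gfx zg by auto
      have eg: "e \<noteq> g" using ze zg by auto
      have c1: "e0 \<inter> f \<subseteq> g"
      proof -
        have ge0: "g \<noteq> e0" using ze0 zg by auto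
        from sp_cases(1)[OF sp e0E(1) gE ge0[symmetric]]
        show ?thesis
        proof
          assume "card (e0 - g) = 1"
          then obtain y where "e0 - g = {y}" by (meson card_1_singletonE)
          then have "e0 - g = {z}" using ze0 zg by auto
          then show ?thesis using zf by auto
        next
          assume "card (g - e0) = 1"
          then obtain y where "g - e0 = {y}" by (meson card_1_singletonE)
          moreover have "x \<in> g - e0" using gfx e0f xz by auto
          ultimately have "g - e0 = {x}" by auto
          then have sub: "g \<inter> f \<subseteq> e0 \<inter> f" using gfx by auto
          have "card g = card (g \<inter> f) + card (g - f)" using fe gE card_Int_Diff by auto
          moreover have "card e0 = card (e0 \<inter> f) + card (e0 - f)" using fe e0E card_Int_Diff by auto
          ultimately have "card (e0 \<inter> f) \<le> card (g \<inter> f)" using e0min[OF gE gf] gfx e0f by simp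
          then have "g \<inter> f = e0 \<inter> f" using sub fe e0E
            by (meson card_seteq finite_Int)
          then show ?thesis by auto
        qed
      qed
      from sp_cases(1)[OF sp eE gE eg]
      show ?thesis
      proof
        assume "card (e - g) = 1"
        then obtain y where "e - g = {y}" by (meson card_1_singletonE)
        then have "e - g = {z}" using ze zg by auto
        then show ?thesis by auto
      next
        assume "card (g - e) = 1"
        then obtain y where "g - e = {y}" by (meson card_1_singletonE)
        moreover have "x \<in> g - e" using gfx ezf xz by auto
        ultimately have "g - e = {x}" by auto
        then have "g \<inter> f \<subseteq> e" using gfx by auto
        with c1 have "e0 \<inter> f \<subseteq> e" by auto
        then have "e0 \<subseteq> e" using e0f ze by auto
        then have "e0 = e" using sp_cases(2)[OF sp e0E(1) eE] by auto
        then show ?thesis using c1 e0f by auto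
      qed
    qed
  qed
  show ?thesis
  proof (intro exI conjI)
    show "\<exists>e\<in>E. z\<in>e" using ze0 e0E by blast
    show "\<exists>g\<in>E. z\<notin>g" using fE zf by blast
    show "\<forall>e\<in>E. \<forall>g\<in>E. z\<in>e \<longrightarrow> z\<notin>g \<longrightarrow> e - {z} \<subseteq> g" using key by blast
  qed
qed



lemma count:
  "finite E \<Longrightarrow> one_sperner E \<Longrightarrow> E \<noteq> {} \<Longrightarrow> \<forall>e\<in>E. finite e \<Longrightarrow> card (TT V E) + 2 \<le> 2 * card E"
proof (induction "card E" arbitrary: E rule: less_induct)
  case less
  have finT: "finite (TT V X)" if "finite X" for X :: "'a set set"
  proof -
    have "TT V X \<subseteq> Pow X" unfolding TT_def vtyp_def by auto
    then show ?thesis using that finite_subset by blast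
  qed
  show ?case
  proof (cases "card E \<ge> 2")
    case False
    moreover have "card E > 0" using less.prems(1,3) by auto
    ultimately have "card E = 1" by linarith
    then obtain e where E: "E = {e}" by (meson card_1_singletonE)
    have "TT V E = {}" unfolding TT_def vtyp_def E by auto
    then show ?thesis using E by simp
  next
    case True
    obtain z where z1: "\<exists>e\<in>E. z\<in>e" and z2: "\<exists>g\<in>E. z\<notin>g"
      and key: "\<forall>e\<in>E. \<forall>g\<in>E. z\<in>e \<longrightarrow> z\<notin>g \<longrightarrow> e - {z} \<subseteq> g"
      using decomp[OF less.prems(1,2) True less.prems(4)] by blast
    define E1 where "E1 = {e\<in>E. z\<in>e}"
    define E2 where "E2 = {e\<in>E. z\<notin>e}"
    have E12: "E = E1 \<union> E2" "E1 \<inter> E2 = {}" unfolding E1_def E2_def by auto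
    have f1: "finite E1" "finite E2" using less.prems(1) unfolding E1_def E2_def by auto
    have ne: "E1 \<noteq> {}" "E2 \<noteq> {}" using z1 z2 unfolding E1_def E2_def by auto
    have cE: "card E = card E1 + card E2" using E12 f1 card_Un_disjoint by simp
    have lt: "card E1 < card E" "card E2 < card E" using cE ne f1 by (auto simp: card_gt_0_iff)
    have IH1: "card (TT V E1) + 2 \<le> 2 * card E1"
      by (rule less.hyps[OF lt(1) f1(1) one_sperner_subset[OF less.prems(2)] ne(1)])
         (use less.prems E12 in auto)
    have IH2: "card (TT V E2) + 2 \<le> 2 * card E2"
      by (rule less.hyps[OF lt(2) f1(2) one_sperner_subset[OF less.prems(2)] ne(2)])
         (use less.prems E12 in auto)
    have incl: "TT V E \<subseteq> {E1, E2} \<union> (\<lambda>A. A \<union> E2) ` TT V E1 \<union> TT V E2"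
    proof
      fix S assume "S \<in> TT V E"
      then obtain v where v: "v \<in> V" "S = vtyp E v" "S \<noteq> {}" "S \<noteq> E" unfolding TT_def by auto
      have Sun: "S = vtyp E1 v \<union> vtyp E2 v" using v(2) E12 unfolding vtyp_def by auto
      show "S \<in> {E1, E2} \<union> (\<lambda>A. A \<union> E2) ` TT V E1 \<union> TT V E2"
      proof (cases "v = z")
        case True
        then have "S = E1" using v(2) unfolding vtyp_def E1_def by simp
        then show ?thesis by simp
      next
        case vz: False
        show ?thesis
        proof (cases "vtyp E1 v = {}")
          case True
          then have "S = vtyp E2 v" using Sun by simp
          then show ?thesis using v unfolding TT_def by auto
        next
          case False
          then obtain e where e: "e \<in> E1" "v \<in> e" unfolding vtyp_def by auto
          have "\<forall>g\<in>E2. v \<in> g"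
          proof
            fix g assume "g \<in> E2"
            then have "g \<in> E" "z \<notin> g" unfolding E2_def by auto
            moreover have "e \<in> E" "z \<in> e" using e unfolding E1_def by auto
            ultimately have "e - {z} \<subseteq> g" using key by blast
            then show "v \<in> g" using e(2) vz by blast
          qed
          then have "vtyp E2 v = E2" unfolding vtyp_def E2_def by auto
          then have S: "S = vtyp E1 v \<union> E2" using Sun by simp
          have "vtyp E1 v \<noteq> E1" using S v(4) E12 by auto
          then have "vtyp E1 v \<in> TT V E1" using False v(1) unfolding TT_def by auto
          then show ?thesis using S by blast
        qed
      qed
    qed
    have "card (TT V E) \<le> card ({E1, E2} \<union> (\<lambda>A. A \<union> E2) ` TT V E1 \<union> TT V E2)"
      by (rule card_mono[OF _ incl]) (use finT f1 in auto)
    also have "\<dots> \<le> card {E1, E2} + card ((\<lambda>A. A \<union> E2) ` TT V E1) + card (TT V E2)"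
      using card_Un_le[of "{E1, E2} \<union> (\<lambda>A. A \<union> E2) ` TT V E1" "TT V E2"]
        card_Un_le[of "{E1, E2}" "(\<lambda>A. A \<union> E2) ` TT V E1"] by linarith
    also have "\<dots> \<le> 2 + card (TT V E1) + card (TT V E2)"
    proof -
      have "card {E1, E2} \<le> 2" by (cases "E1 = E2") auto
      moreover have "card ((\<lambda>A. A \<union> E2) ` TT V E1) \<le> card (TT V E1)"
        using card_image_le[OF finT[OF f1(1)]] by blast
      ultimately show ?thesis by linarith
    qed
    finally show ?thesis using IH1 IH2 cE by linarith
  qed
qed



lemma reduced_image:
  assumes h: "inj h" and r: "reduced_1_sperner V E"
  shows "reduced_1_sperner (h ` V) ((`) h ` E)"
proof -
  have dif: "h ` a - h ` b = h ` (a - b)" for a b using h by (simp add: image_set_diff)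
  have cd: "card (h ` a) = card a" for a using h by (simp add: card_image inj_on_subset)
  have ii: "h ` a = h ` b \<longleftrightarrow> a = b" for a b using h by (simp add: inj_image_eq_iff)
  have mem: "h x \<in> h ` a \<longleftrightarrow> x \<in> a" for x a using h by (simp add: inj_image_mem_iff)
  have r0: "hypergraph V E" "one_sperner E" "\<forall>v\<in>V. \<not> universal_vertex E v" "\<forall>v\<in>V. \<not> isolated_vertex E v"
    "\<forall>u\<in>V. \<forall>v\<in>V. \<not> twins E u v" using r unfolding reduced_1_sperner_def by auto
  have "hypergraph (h ` V) ((`) h ` E)" using r0(1) unfolding hypergraph_def by (auto simp: image_mono)
  moreover have "one_sperner ((`) h ` E)"
    unfolding one_sperner_def
  proof (intro ballI impI)
    fix a b assume "a \<in> (`) h ` E" "b \<in> (`) h ` E" "a \<noteq> b"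
    then obtain e f where "e \<in> E" "f \<in> E" "a = h ` e" "b = h ` f" "e \<noteq> f" by auto
    then show "min (card (a - b)) (card (b - a)) = 1" using r0(2) unfolding one_sperner_def
      by (simp add: dif cd)
  qed
  moreover have "\<forall>v\<in>h ` V. \<not> universal_vertex ((`) h ` E) v"
    using r0(3) unfolding universal_vertex_def by (auto simp: mem)
  moreover have "\<forall>v\<in>h ` V. \<not> isolated_vertex ((`) h ` E) v"
    using r0(4) unfolding isolated_vertex_def by (auto simp: mem)
  moreover have "\<forall>u\<in>h ` V. \<forall>v\<in>h ` V. \<not> twins ((`) h ` E) u v"
    using r0(5) unfolding twins_def by (auto simp: mem)
  ultimately show ?thesis unfolding reduced_1_sperner_def by blast
qed

lemma glue:
  assumes r1: "reduced_1_sperner V1 E1" and r2: "reduced_1_sperner V2 E2"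
    and d: "V1 \<inter> V2 = {}" and z: "z \<notin> V1" "z \<notin> V2" and w: "w \<notin> V1" "w \<notin> V2" "z \<noteq> w"
    and n1: "E1 \<noteq> {}" and n2: "E2 \<noteq> {}"
  shows "reduced_1_sperner (V1 \<union> V2 \<union> {z, w}) (insert z ` E1 \<union> (\<lambda>f. f \<union> V1 \<union> {w}) ` E2)
     \<and> card (insert z ` E1 \<union> (\<lambda>f. f \<union> V1 \<union> {w}) ` E2) = card E1 + card E2"
proof -
  define A where "A = insert z ` E1"
  define B where "B = (\<lambda>f. f \<union> V1 \<union> {w}) ` E2"
  have h1: "finite V1" "\<forall>e\<in>E1. e \<subseteq> V1" and h2: "finite V2" "\<forall>e\<in>E2. e \<subseteq> V2"
    using r1 r2 unfolding reduced_1_sperner_def hypergraph_def by auto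
  have s1: "one_sperner E1" and s2: "one_sperner E2"
    using r1 r2 unfolding reduced_1_sperner_def by auto
  have rr1: "\<forall>v\<in>V1. \<not> universal_vertex E1 v" "\<forall>v\<in>V1. \<not> isolated_vertex E1 v" "\<forall>u\<in>V1. \<forall>v\<in>V1. \<not> twins E1 u v"
    using r1 unfolding reduced_1_sperner_def by auto
  have u1: "\<forall>v\<in>V1. \<exists>e\<in>E1. v \<notin> e" using rr1(1) unfolding universal_vertex_def by blast
  have i1: "\<forall>v\<in>V1. \<exists>e\<in>E1. v \<in> e" using rr1(2) unfolding isolated_vertex_def by blast
  have t1: "\<forall>u\<in>V1. \<forall>v\<in>V1. u \<noteq> v \<longrightarrow> (\<exists>e\<in>E1. (u \<in> e) \<noteq> (v \<in> e))"
    using rr1(3) unfolding twins_def by blast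
  have rr2: "\<forall>v\<in>V2. \<not> universal_vertex E2 v" "\<forall>v\<in>V2. \<not> isolated_vertex E2 v" "\<forall>u\<in>V2. \<forall>v\<in>V2. \<not> twins E2 u v"
    using r2 unfolding reduced_1_sperner_def by auto
  have u2: "\<forall>v\<in>V2. \<exists>e\<in>E2. v \<notin> e" using rr2(1) unfolding universal_vertex_def by blast
  have i2: "\<forall>v\<in>V2. \<exists>e\<in>E2. v \<in> e" using rr2(2) unfolding isolated_vertex_def by blast
  have t2: "\<forall>u\<in>V2. \<forall>v\<in>V2. u \<noteq> v \<longrightarrow> (\<exists>e\<in>E2. (u \<in> e) \<noteq> (v \<in> e))"
    using rr2(3) unfolding twins_def by blast
  have injA: "inj_on (insert z) E1"
    using h1 z by (intro inj_onI) (metis Diff_insert_absorb subset_iff)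
  have injB: "inj_on (\<lambda>f. f \<union> V1 \<union> {w}) E2"
  proof (rule inj_onI)
    fix f g assume "f \<in> E2" "g \<in> E2" "f \<union> V1 \<union> {w} = g \<union> V1 \<union> {w}"
    then show "f = g" using h2 d w by blast
  qed
  have AB: "A \<inter> B = {}" unfolding A_def B_def using z w h2 by auto
  have card: "card (A \<union> B) = card E1 + card E2"
  proof -
    have "finite E1" using h1 by (metis finite_Pow_iff finite_subset subsetI PowI)
    moreover have "finite E2" using h2 by (metis finite_Pow_iff finite_subset subsetI PowI)
    ultimately have fA: "finite A" and fB: "finite B" unfolding A_def B_def by auto
    have "card (A \<union> B) = card A + card B" by (rule card_Un_disjoint[OF fA fB AB])
    moreover have "card A = card E1" unfolding A_def by (rule card_image[OF injA])
    moreover have "card B = card E2" unfolding B_def by (rule card_image[OF injB])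
    ultimately show ?thesis by simp
  qed
  have hyp: "hypergraph (V1 \<union> V2 \<union> {z, w}) (A \<union> B)"
    unfolding hypergraph_def A_def B_def using h1 h2 by auto
  have sp: "one_sperner (A \<union> B)"
    unfolding one_sperner_def
  proof (intro ballI impI)
    fix a b assume a: "a \<in> A \<union> B" and b: "b \<in> A \<union> B" and ab: "a \<noteq> b"
    have cross: "min (card (a - b)) (card (b - a)) = 1" if a: "a \<in> A" and b: "b \<in> B" for a b
    proof -
      obtain e where e: "e \<in> E1" "a = insert z e" using a unfolding A_def by auto
      obtain f where f: "f \<in> E2" "b = f \<union> V1 \<union> {w}" using b unfolding B_def by auto
      have "a - b = {z}" using e f h1 h2 z w by auto
      moreover have "w \<in> b - a" using e f h1 w by auto
      moreover have "finite (b - a)" using f h1 h2 by (metis finite_Diff finite_Un finite_insert finite_subset insert_is_Un sup_commute)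
      ultimately show ?thesis by (metis card.empty card_1_singleton_iff card_gt_0_iff empty_iff min_def
          One_nat_def Suc_leI)
    qed
    show "min (card (a - b)) (card (b - a)) = 1"
    proof (cases "a \<in> A")
      case aA: True
      show ?thesis
      proof (cases "b \<in> A")
        case True
        obtain e where e: "e \<in> E1" "a = insert z e" using aA unfolding A_def by auto
        obtain e' where e': "e' \<in> E1" "b = insert z e'" using True unfolding A_def by auto
        have "a - b = e - e'" "b - a = e' - e" using e e' h1 z by auto
        moreover have "e \<noteq> e'" using e e' ab by auto
        ultimately show ?thesis using s1 e e' unfolding one_sperner_def by simp
      next
        case False then have "b \<in> B" using b by auto
        then show ?thesis using cross aA by blast
      qed
    next
      case aB: False
      then have aB: "a \<in> B" using a by auto
      show ?thesis
      proof (cases "b \<in> A")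
        case True
        then show ?thesis using cross[OF True aB] by (simp add: min.commute)
      next
        case False then have bB: "b \<in> B" using b by auto
        obtain e where e: "e \<in> E2" "a = e \<union> V1 \<union> {w}" using aB unfolding B_def by auto
        obtain e' where e': "e' \<in> E2" "b = e' \<union> V1 \<union> {w}" using bB unfolding B_def by auto
        have "a - b = e - e'" "b - a = e' - e" using e e' h2 d w by auto
        moreover have "e \<noteq> e'" using e e' ab by auto
        ultimately show ?thesis using s2 e e' unfolding one_sperner_def by simp
      qed
    qed
  qed
  obtain e1 where e1: "e1 \<in> E1" using n1 by auto
  obtain e2 where e2: "e2 \<in> E2" using n2 by auto
  have univ: "\<forall>v\<in>V1 \<union> V2 \<union> {z, w}. \<exists>a\<in>A \<union> B. v \<notin> a"
  proof
    fix v assume v: "v \<in> V1 \<union> V2 \<union> {z, w}"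
    show "\<exists>a\<in>A \<union> B. v \<notin> a"
    proof -
      { assume "v \<in> V1" then obtain e where "e \<in> E1" "v \<notin> e" using u1 by auto
        then have ?thesis using z \<open>v \<in> V1\<close> unfolding A_def by (intro bexI[of _ "insert z e"]) auto }
      moreover
      { assume "v \<in> V2" then obtain e where "e \<in> E2" "v \<notin> e" using u2 by auto
        then have ?thesis using d w \<open>v \<in> V2\<close> unfolding B_def by (intro bexI[of _ "e \<union> V1 \<union> {w}"]) auto }
      moreover
      { assume "v = z" then have ?thesis using e2 h2 z w unfolding B_def
          by (intro bexI[of _ "e2 \<union> V1 \<union> {w}"]) auto }
      moreover
      { assume "v = w" then have ?thesis using e1 h1 z w unfolding A_def
          by (intro bexI[of _ "insert z e1"]) auto }
      ultimately show ?thesis using v by blast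
    qed
  qed
  have isol: "\<forall>v\<in>V1 \<union> V2 \<union> {z, w}. \<exists>a\<in>A \<union> B. v \<in> a"
  proof
    fix v assume v: "v \<in> V1 \<union> V2 \<union> {z, w}"
    show "\<exists>a\<in>A \<union> B. v \<in> a"
    proof -
      { assume "v \<in> V1" then obtain e where "e \<in> E1" "v \<in> e" using i1 by auto
        then have ?thesis unfolding A_def by (intro bexI[of _ "insert z e"]) auto }
      moreover
      { assume "v \<in> V2" then obtain e where "e \<in> E2" "v \<in> e" using i2 by auto
        then have ?thesis unfolding B_def by (intro bexI[of _ "e \<union> V1 \<union> {w}"]) auto }
      moreover
      { assume "v = z" then have ?thesis using e1 unfolding A_def
          by (intro bexI[of _ "insert z e1"]) auto }
      moreover
      { assume "v = w" then have ?thesis using e2 unfolding B_def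
          by (intro bexI[of _ "e2 \<union> V1 \<union> {w}"]) auto }
      ultimately show ?thesis using v by blast
    qed
  qed
  have sep: "\<exists>a\<in>A \<union> B. (u \<in> a) \<noteq> (v \<in> a)" if u: "u \<in> V1 \<union> V2 \<union> {z, w}" and v: "v \<in> V1 \<union> V2 \<union> {z, w}"
    and uv: "u \<noteq> v" for u v
  proof -
    have inA: "x \<in> insert z e \<longleftrightarrow> x = z \<or> x \<in> e" for x e by auto
    have inB: "x \<in> e \<union> V1 \<union> {w} \<longleftrightarrow> x \<in> e \<or> x \<in> V1 \<or> x = w" for x e by auto
    have P: "\<exists>a\<in>A \<union> B. (u \<in> a) \<noteq> (v \<in> a)" if pp: "u \<in> V1 \<union> V2 \<union> {z, w}" "v \<in> V1 \<union> V2 \<union> {z, w}" "u \<noteq> v"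
        "u \<in> V1 \<or> (u \<in> V2 \<and> v \<notin> V1) \<or> (u = z \<and> v = w)" for u v
    proof -
      { assume uv1: "u \<in> V1" "v \<in> V1"
        then obtain e where "e \<in> E1" "(u \<in> e) \<noteq> (v \<in> e)" using t1 pp(3) by blast
        then have ?thesis using uv1 z unfolding A_def by (intro bexI[of _ "insert z e"]) auto }
      moreover
      { assume uv1: "u \<in> V1" "v \<in> V2"
        then obtain e where "e \<in> E2" "v \<notin> e" using u2 by blast
        then have ?thesis using uv1 d w unfolding B_def by (intro bexI[of _ "e \<union> V1 \<union> {w}"]) auto }
      moreover
      { assume uv1: "u \<in> V1" "v = z"
        then have ?thesis using e2 h2 z w unfolding B_def by (intro bexI[of _ "e2 \<union> V1 \<union> {w}"]) auto }
      moreover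
      { assume uv1: "u \<in> V1" "v = w"
        then obtain e where "e \<in> E1" "u \<in> e" using i1 by blast
        then have ?thesis using uv1 h1 w unfolding A_def by (intro bexI[of _ "insert z e"]) auto }
      moreover
      { assume uv1: "u \<in> V2" "v \<in> V2"
        then obtain e where "e \<in> E2" "(u \<in> e) \<noteq> (v \<in> e)" using t2 pp(3) by blast
        then have ?thesis using uv1 d w unfolding B_def by (intro bexI[of _ "e \<union> V1 \<union> {w}"]) auto }
      moreover
      { assume uv1: "u \<in> V2" "v = z"
        then obtain e where "e \<in> E2" "u \<in> e" using i2 by blast
        then have ?thesis using uv1 h2 z w unfolding B_def by (intro bexI[of _ "e \<union> V1 \<union> {w}"]) auto }
      moreover
      { assume uv1: "u \<in> V2" "v = w"
        then obtain e where "e \<in> E2" "u \<notin> e" using u2 by blast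
        then have ?thesis using uv1 d w unfolding B_def by (intro bexI[of _ "e \<union> V1 \<union> {w}"]) auto }
      moreover
      { assume uv1: "u = z" "v = w"
        then have ?thesis using e1 h1 w unfolding A_def by (intro bexI[of _ "insert z e1"]) auto }
      ultimately show ?thesis using pp z w by blast
    qed
    have "u \<in> V1 \<or> (u \<in> V2 \<and> v \<notin> V1) \<or> (u = z \<and> v = w)
        \<or> v \<in> V1 \<or> (v \<in> V2 \<and> u \<notin> V1) \<or> (v = z \<and> u = w)" using u v uv by auto
    then show ?thesis using P[OF u v uv] P[OF v u uv[symmetric]] by metis
  qed
  have "reduced_1_sperner (V1 \<union> V2 \<union> {z, w}) (A \<union> B)"
    unfolding reduced_1_sperner_def universal_vertex_def isolated_vertex_def twins_def
    using hyp sp univ isol sep by blast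
  then show ?thesis using card unfolding A_def B_def by simp
qed



fun NN :: "nat \<Rightarrow> nat" where
  "NN 0 = 0"
| "NN (Suc j) = 2 * NN j + 2"

fun HE :: "nat \<Rightarrow> nat set set" where
  "HE 0 = {{}}"
| "HE (Suc j) = insert (2 * NN j) ` HE j \<union> (\<lambda>f. f \<union> {..<NN j} \<union> {2 * NN j + 1}) ` ((`) (\<lambda>x. x + NN j) ` HE j)"

lemma NN_eq0: "NN j + 2 = 2 ^ Suc j"
  by (induction j) auto

lemma NN_eq: "NN j = 2 ^ Suc j - 2"
  using NN_eq0[of j] by simp

lemma HE_props: "reduced_1_sperner {..<NN j} (HE j) \<and> card (HE j) = 2 ^ j"
proof (induction j)
  case 0
  show ?case unfolding reduced_1_sperner_def hypergraph_def one_sperner_def by simp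
next
  case (Suc j)
  define N where "N = NN j"
  have r: "reduced_1_sperner {..<N} (HE j)" and c: "card (HE j) = 2 ^ j" using Suc N_def by auto
  have inj: "inj (\<lambda>x::nat. x + N)" by (simp add: inj_on_def)
  have r2: "reduced_1_sperner ((\<lambda>x. x + N) ` {..<N}) ((`) (\<lambda>x. x + N) ` HE j)"
    by (rule reduced_image[OF inj r])
  have ne: "HE j \<noteq> {}" using c by (metis card.empty power_not_zero zero_neq_numeral)
  have V: "{..<N} \<union> (\<lambda>x. x + N) ` {..<N} \<union> {2 * N, 2 * N + 1} = {..<NN (Suc j)}"
  proof (rule set_eqI)
    fix x
    show "x \<in> {..<N} \<union> (\<lambda>x. x + N) ` {..<N} \<union> {2 * N, 2 * N + 1} \<longleftrightarrow> x \<in> {..<NN (Suc j)}"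
    proof
      assume "x \<in> {..<N} \<union> (\<lambda>x. x + N) ` {..<N} \<union> {2 * N, 2 * N + 1}"
      then show "x \<in> {..<NN (Suc j)}" unfolding N_def by auto
    next
      assume x: "x \<in> {..<NN (Suc j)}"
      show "x \<in> {..<N} \<union> (\<lambda>x. x + N) ` {..<N} \<union> {2 * N, 2 * N + 1}"
      proof (cases "x < N")
        case True then show ?thesis by simp
      next
        case False
        show ?thesis
        proof (cases "x < 2 * N")
          case True
          then have "x \<in> (\<lambda>x. x + N) ` {..<N}" using False by (intro image_eqI[of _ _ "x - N"]) auto
          then show ?thesis by simp
        next
          case False
          then show ?thesis using x unfolding N_def by auto
        qed
      qed
    qed
  qed
  have g: "reduced_1_sperner ({..<N} \<union> (\<lambda>x. x + N) ` {..<N} \<union> {2 * N, 2 * N + 1})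
     (insert (2 * N) ` HE j \<union> (\<lambda>f. f \<union> {..<N} \<union> {2 * N + 1}) ` ((`) (\<lambda>x. x + N) ` HE j))
   \<and> card (insert (2 * N) ` HE j \<union> (\<lambda>f. f \<union> {..<N} \<union> {2 * N + 1}) ` ((`) (\<lambda>x. x + N) ` HE j))
     = card (HE j) + card ((`) (\<lambda>x. x + N) ` HE j)"
  proof (rule glue[OF r r2])
    show "{..<N} \<inter> (\<lambda>x. x + N) ` {..<N} = {}" by auto
    show "2 * N \<notin> {..<N}" by simp
    show "2 * N \<notin> (\<lambda>x. x + N) ` {..<N}" by auto
    show "2 * N + 1 \<notin> {..<N}" by simp
    show "2 * N + 1 \<notin> (\<lambda>x. x + N) ` {..<N}" by auto
    show "2 * N \<noteq> 2 * N + 1" by simp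
    show "HE j \<noteq> {}" by (rule ne)
    show "(`) (\<lambda>x. x + N) ` HE j \<noteq> {}" using ne by simp
  qed
  have c2: "card ((`) (\<lambda>x. x + N) ` HE j) = card (HE j)"
    by (rule card_image, rule inj_onI) (simp add: inj_image_eq_iff[OF inj])
  have HS: "HE (Suc j) = insert (2 * N) ` HE j \<union> (\<lambda>f. f \<union> {..<N} \<union> {2 * N + 1}) ` ((`) (\<lambda>x. x + N) ` HE j)"
    unfolding N_def by (rule HE.simps(2))
  have "reduced_1_sperner {..<NN (Suc j)} (HE (Suc j))" unfolding HS V[symmetric] using g by blast
  moreover have "card (HE (Suc j)) = 2 ^ Suc j" unfolding HS using g c c2 by simp
  ultimately show ?case by blast
qed

theorem proposition17:
  shows "(\<forall>(V :: 'a set) E. reduced_1_sperner V E \<and> card V \<ge> 2 \<longrightarrow>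
            real (card E) \<ge> ceiling ((real (card V) + 2) / 2))
       \<and> (\<forall>k::nat. k \<ge> 2 \<longrightarrow>
            (\<exists>(V :: nat set) E. reduced_1_sperner V E \<and> card V = 2 ^ k - 2
               \<and> card E = 2 ^ (k - 1)
               \<and> real (card E) = ceiling ((real (card V) + 2) / 2)))"
proof (intro conjI allI impI)
  fix V :: "'a set" and E
  assume a: "reduced_1_sperner V E \<and> card V \<ge> 2"
  then have r: "reduced_1_sperner V E" and c: "card V \<ge> 2" by auto
  have fV: "finite V" and sub: "\<forall>e\<in>E. e \<subseteq> V" and sp: "one_sperner E"
    and nu: "\<forall>v\<in>V. \<not> universal_vertex E v" and ni: "\<forall>v\<in>V. \<not> isolated_vertex E v"
    and nt: "\<forall>u\<in>V. \<forall>v\<in>V. \<not> twins E u v"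
    using r unfolding reduced_1_sperner_def hypergraph_def by auto
  have fE: "finite E" using sub fV by (meson Pow_iff finite_Pow_iff finite_subset subsetI)
  have fe: "\<forall>e\<in>E. finite e" using sub fV finite_subset by blast
  have "V \<noteq> {}" using c by auto
  then obtain v where "v \<in> V" by auto
  then have "E \<noteq> {}" using ni unfolding isolated_vertex_def by auto
  have cnt: "card (TT V E) + 2 \<le> 2 * card E" by (rule count[OF fE sp \<open>E \<noteq> {}\<close> fe])
  have T: "TT V E = vtyp E ` V"
  proof -
    have "vtyp E v \<noteq> {}" "vtyp E v \<noteq> E" if "v \<in> V" for v
      using nu ni that unfolding universal_vertex_def isolated_vertex_def vtyp_def by auto
    then show ?thesis unfolding TT_def by auto
  qed
  have "inj_on (vtyp E) V"
  proof (rule inj_onI)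
    fix u v assume uv: "u \<in> V" "v \<in> V" "vtyp E u = vtyp E v"
    show "u = v"
    proof (rule ccontr)
      assume "u \<noteq> v"
      moreover have "\<forall>e\<in>E. u \<in> e \<longleftrightarrow> v \<in> e" using uv(3) unfolding vtyp_def by blast
      ultimately show False using nt uv(1,2) unfolding twins_def by blast
    qed
  qed
  then have "card (TT V E) = card V" unfolding T by (rule card_image)
  with cnt have le: "card V + 2 \<le> 2 * card E" by simp
  have "real (card V + 2) \<le> real (2 * card E)" using le by (simp only: of_nat_le_iff)
  then have "(real (card V) + 2) / 2 \<le> real (card E)" by simp
  then have "ceiling ((real (card V) + 2) / 2) \<le> int (card E)"
    by (simp add: ceiling_le_iff)
  then show "real (card E) \<ge> ceiling ((real (card V) + 2) / 2)"
    by (metis of_int_le_iff of_int_of_nat_eq)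
next
  fix k :: nat assume k: "k \<ge> 2"
  define j where "j = k - 1"
  have kj: "k = Suc j" using k j_def by simp
  have p: "reduced_1_sperner {..<NN j} (HE j) \<and> card (HE j) = 2 ^ j" by (rule HE_props)
  have cV: "card {..<NN j} = 2 ^ k - 2" using NN_eq kj by simp
  have "(2::nat) ^ 1 \<le> 2 ^ k" using k by (intro power_increasing) auto
  then have ge: "(2::nat) \<le> 2 ^ k" by simp
  have "(real (2 ^ k - 2) + 2) / 2 = real ((2::nat) ^ j)"
    using ge kj by (simp add: of_nat_diff)
  then have "ceiling ((real (card {..<NN j}) + 2) / 2) = int (2 ^ j)"
    unfolding cV by (metis ceiling_of_nat)
  then have "real (card (HE j)) = ceiling ((real (card {..<NN j}) + 2) / 2)"
    using p by simp
  then show "\<exists>(V :: nat set) E. reduced_1_sperner V E \<and> card V = 2 ^ k - 2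
               \<and> card E = 2 ^ (k - 1)
               \<and> real (card E) = ceiling ((real (card V) + 2) / 2)"
  proof (intro exI conjI)
    show "reduced_1_sperner {..<NN j} (HE j)" using p by blast
    show "card {..<NN j} = 2 ^ k - 2" by (rule cV)
    show "card (HE j) = 2 ^ (k - 1)" using p j_def by blast
  qed
qed

end
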